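(* Let $r\ge 3$ and let $\mathcal H=(V,E)$ be an $r$-uniform bi-hypergraph. Then $\mathcal H$ is colorable if either of the following holds: (i) $|E|<(r-1)^{r-1}$; (ii) every edge of $\mathcal H$ shares at least one vertex with fewer than $(r-1)^{r-1}\mathrm{e}^{-1}-1$ other edges of $\mathcal H$, where $\mathrm{e}$ is the base of the natural logarithm.
   Context: A bi-hypergraph $\mathcal H=(V,E)$ consists of a finite vertex set $V$ and a set $E$ of subsets of $V$, called edges, with no edge contained in another. It is $r$-uniform if every edge has exactly $r$ elements. A mapping $f:V\to\mathbb N$ is a proper coloring of $\mathcal H$ if $1<|f(e)|<|e|$ for every $e\in E$, where $f(e)=\{f(v):v\in e\}$. $\mathcal H$ is colorable if it has a proper coloring, and uncolorable otherwise. *)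

theory Defs
  imports Complex_Main
begin

definition bi_hypergraph :: "'a set \<Rightarrow> 'a set set \<Rightarrow> bool" where
  "bi_hypergraph V E \<longleftrightarrow> finite V \<and> (\<forall>e\<in>E. e \<subseteq> V)
     \<and> (\<forall>e\<in>E. \<forall>e'\<in>E. e \<subseteq> e' \<longrightarrow> e = e')"

definition uniform :: "nat \<Rightarrow> 'a set set \<Rightarrow> bool" where
  "uniform r E \<longleftrightarrow> (\<forall>e\<in>E. card e = r)"

definition proper_coloring :: "'a set set \<Rightarrow> ('a \<Rightarrow> nat) \<Rightarrow> bool" where
  "proper_coloring E f \<longleftrightarrow> (\<forall>e\<in>E. 1 < card (f ` e) \<and> card (f ` e) < card e)"

definition colorable :: "'a set \<Rightarrow> 'a set set \<Rightarrow> bool" where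
  "colorable V E \<longleftrightarrow> (\<exists>f :: 'a \<Rightarrow> nat. proper_coloring E f)"

end

theory Submission imports Defs "HOL-Library.FuncSet" begin

definition monoc :: "('a \<Rightarrow> nat) \<Rightarrow> 'a set \<Rightarrow> bool" where
  "monoc f e \<longleftrightarrow> (\<exists>c. \<forall>v\<in>e. f v = c)"

lemma split_count:
  assumes "U \<subseteq> V"
  shows "card {f \<in> PiE V (\<lambda>_. C). P (restrict f U) \<and> Q (restrict f (V-U))}
       = card {g \<in> PiE U (\<lambda>_. C). P g} * card {h \<in> PiE (V-U) (\<lambda>_. C). Q h}"
proof -
  have "bij_betw (\<lambda>f. (restrict f U, restrict f (V-U)))
     {f \<in> PiE V (\<lambda>_. C). P (restrict f U) \<and> Q (restrict f (V-U))}
     ({g \<in> PiE U (\<lambda>_. C). P g} \<times> {h \<in> PiE (V-U) (\<lambda>_. C). Q h})"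
    unfolding bij_betw_def
  proof (intro conjI)
    show "inj_on (\<lambda>f. (restrict f U, restrict f (V-U)))
     {f \<in> PiE V (\<lambda>_. C). P (restrict f U) \<and> Q (restrict f (V-U))}"
    proof (rule inj_onI)
      fix f g assume f: "f \<in> {f \<in> PiE V (\<lambda>_. C). P (restrict f U) \<and> Q (restrict f (V-U))}"
        and g: "g \<in> {f \<in> PiE V (\<lambda>_. C). P (restrict f U) \<and> Q (restrict f (V-U))}"
        and eq: "(restrict f U, restrict f (V-U)) = (restrict g U, restrict g (V-U))"
      show "f = g"
      proof (rule PiE_ext)
        show "f \<in> PiE V (\<lambda>_. C)" "g \<in> PiE V (\<lambda>_. C)" using f g by auto
        fix i assume "i \<in> V"
        then show "f i = g i" using eq by (cases "i \<in> U") (metis restrict_apply' prod.inject DiffI)+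
      qed
    qed
  next
    show "(\<lambda>f. (restrict f U, restrict f (V-U))) `
     {f \<in> PiE V (\<lambda>_. C). P (restrict f U) \<and> Q (restrict f (V-U))} =
     ({g \<in> PiE U (\<lambda>_. C). P g} \<times> {h \<in> PiE (V-U) (\<lambda>_. C). Q h})"
    proof (rule set_eqI, rule iffI)
      fix y assume "y \<in> (\<lambda>f. (restrict f U, restrict f (V-U))) `
        {f \<in> PiE V (\<lambda>_. C). P (restrict f U) \<and> Q (restrict f (V-U))}"
      then show "y \<in> ({g \<in> PiE U (\<lambda>_. C). P g} \<times> {h \<in> PiE (V-U) (\<lambda>_. C). Q h})"
        using assms by (auto simp: PiE_iff)
    next
      fix y assume y: "y \<in> ({g \<in> PiE U (\<lambda>_. C). P g} \<times> {h \<in> PiE (V-U) (\<lambda>_. C). Q h})"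
      obtain g h where gh: "y = (g,h)" by (cases y)
      define f where "f = (\<lambda>x. if x \<in> U then g x else h x)"
      have g: "g \<in> PiE U (\<lambda>_. C)" "P g" and h: "h \<in> PiE (V-U) (\<lambda>_. C)" "Q h" using y gh by auto
      have r1: "restrict f U = g"
        using g(1) by (intro ext) (auto simp: f_def PiE_iff extensional_def)
      have r2: "restrict f (V-U) = h"
        using h(1) by (intro ext) (auto simp: f_def PiE_iff extensional_def)
      have fV: "f \<in> PiE V (\<lambda>_. C)"
        using g(1) h(1) assms by (auto simp: f_def PiE_iff extensional_def)
      show "y \<in> (\<lambda>f. (restrict f U, restrict f (V-U))) `
        {f \<in> PiE V (\<lambda>_. C). P (restrict f U) \<and> Q (restrict f (V-U))}"
        using fV r1 r2 g h gh by (intro image_eqI[of _ _ "restrict f V"]) auto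
    qed
  qed
  then show ?thesis by (simp add: bij_betw_same_card card_cartesian_product)
qed

lemma card_monoc:
  assumes "finite e" "e \<noteq> {}"
  shows "card {g \<in> PiE e (\<lambda>_. {0..<m::nat}). monoc g e} = m"
proof -
  have "bij_betw (\<lambda>c. restrict (\<lambda>_. c) e) {0..<m} {g \<in> PiE e (\<lambda>_. {0..<m::nat}). monoc g e}"
    unfolding bij_betw_def
  proof (intro conjI)
    show "inj_on (\<lambda>c. restrict (\<lambda>_. c) e) {0..<m}"
      using assms(2) by (auto simp: inj_on_def) (metis all_not_in_conv restrict_apply')
  next
    show "(\<lambda>c. restrict (\<lambda>_. c) e) ` {0..<m} = {g \<in> PiE e (\<lambda>_. {0..<m::nat}). monoc g e}"
    proof (rule set_eqI, rule iffI)
      fix g assume "g \<in> (\<lambda>c. restrict (\<lambda>_. c) e) ` {0..<m}"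
      then show "g \<in> {g \<in> PiE e (\<lambda>_. {0..<m::nat}). monoc g e}"
        by (auto simp: monoc_def)
    next
      fix g assume g: "g \<in> {g \<in> PiE e (\<lambda>_. {0..<m::nat}). monoc g e}"
      then obtain c where c: "\<forall>v\<in>e. g v = c" by (auto simp: monoc_def)
      obtain v where v: "v \<in> e" using assms(2) by auto
      have "c \<in> {0..<m}" using g c v by (auto simp: PiE_iff)
      moreover have "g = restrict (\<lambda>_. c) e"
        using g c by (intro ext) (auto simp: PiE_iff extensional_def)
      ultimately show "g \<in> (\<lambda>c. restrict (\<lambda>_. c) e) ` {0..<m}" by blast
    qed
  qed
  from bij_betw_same_card[OF this] show ?thesis by simp
qed


locale LLL_setup =
  fixes V :: "'a set" and E :: "'a set set" and m r :: nat
  assumes finV: "finite V" and sub: "\<forall>e\<in>E. e \<subseteq> V" and unif: "\<forall>e\<in>E. card e = r"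
    and r1: "r \<ge> 1" and m2: "m \<ge> 2"
begin

definition "F = PiE V (\<lambda>_. {0..<m})"
definition "N S = card {f\<in>F. \<forall>e\<in>S. \<not> monoc f e}"
definition "B i S = card {f\<in>F. monoc f i \<and> (\<forall>e\<in>S. \<not> monoc f e)}"

lemma finF: "finite F"
  unfolding F_def using finV by (simp add: finite_PiE)

lemma finE: "finite E"
proof -
  have "E \<subseteq> Pow V" using sub by auto
  then show ?thesis using finV finite_subset by blast
qed

lemma N_insert: "N (insert i S) + B i S = N S"
proof -
  have "{f\<in>F. \<forall>e\<in>S. \<not> monoc f e} = {f\<in>F. \<forall>e\<in>insert i S. \<not> monoc f e} \<union> {f\<in>F. monoc f i \<and> (\<forall>e\<in>S. \<not> monoc f e)}"
    by auto
  moreover have "card ({f\<in>F. \<forall>e\<in>insert i S. \<not> monoc f e} \<union> {f\<in>F. monoc f i \<and> (\<forall>e\<in>S. \<not> monoc f e)})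
     = card {f\<in>F. \<forall>e\<in>insert i S. \<not> monoc f e} + card {f\<in>F. monoc f i \<and> (\<forall>e\<in>S. \<not> monoc f e)}"
    by (rule card_Un_disjoint) (use finF in auto)
  ultimately show ?thesis unfolding N_def B_def by simp
qed

lemma B_anti: "T \<subseteq> S \<Longrightarrow> B i S \<le> B i T"
  unfolding B_def by (rule card_mono) (use finF in auto)

lemma N0: "N {} = m ^ card V"
  unfolding N_def F_def using finV by (simp add: card_PiE)

lemma indep:
  assumes i: "i \<in> E" and S: "S \<subseteq> E" and dis: "\<forall>j\<in>S. j \<inter> i = {}"
  shows "B i S * m ^ r = m * N S"
proof -
  have iV: "i \<subseteq> V" using sub i by auto
  have fini: "finite i" using iV finV finite_subset by blast
  have ci: "card i = r" using unif i by auto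
  have ine: "i \<noteq> {}" using ci r1 by auto
  define Q where "Q = (\<lambda>h. \<forall>e\<in>S. \<not> monoc h e)"
  have mi: "monoc f i \<longleftrightarrow> monoc (restrict f i) i" for f
    by (simp add: monoc_def)
  have mS: "Q f \<longleftrightarrow> Q (restrict f (V - i))" for f
  proof -
    have "monoc f e \<longleftrightarrow> monoc (restrict f (V - i)) e" if "e \<in> S" for e
    proof -
      have "e \<subseteq> V - i" using that S sub dis by auto
      then show ?thesis unfolding monoc_def by (metis restrict_apply' subsetD)
    qed
    then show ?thesis unfolding Q_def by auto
  qed
  have "B i S = card {f \<in> PiE V (\<lambda>_. {0..<m}). monoc (restrict f i) i \<and> Q (restrict f (V-i))}"
    unfolding B_def F_def using mi mS unfolding Q_def by simp
  also have "\<dots> = card {g \<in> PiE i (\<lambda>_. {0..<m}). monoc g i} * card {h \<in> PiE (V-i) (\<lambda>_. {0..<m}). Q h}"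
    by (rule split_count[OF iV])
  also have "\<dots> = m * card {h \<in> PiE (V-i) (\<lambda>_. {0..<m}). Q h}"
    using card_monoc[OF fini ine] by simp
  finally have b: "B i S = m * card {h \<in> PiE (V-i) (\<lambda>_. {0..<m}). Q h}" .
  have "N S = card {f \<in> PiE V (\<lambda>_. {0..<m}). (\<lambda>_. True) (restrict f i) \<and> Q (restrict f (V-i))}"
    unfolding N_def F_def using mS unfolding Q_def by simp
  also have "\<dots> = card {g \<in> PiE i (\<lambda>_. {0..<m::nat}). True} * card {h \<in> PiE (V-i) (\<lambda>_. {0..<m}). Q h}"
    by (rule split_count[OF iV])
  also have "\<dots> = m ^ r * card {h \<in> PiE (V-i) (\<lambda>_. {0..<m}). Q h}"
    using fini ci by (simp add: card_PiE)
  finally show ?thesis using b by simp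
qed

lemma indep_real:
  assumes "i \<in> E" "S \<subseteq> E" "\<forall>j\<in>S. j \<inter> i = {}"
  shows "real (B i S) = real (N S) / real m ^ (r - 1)"
proof -
  have "real (B i S) * real m ^ r = real m * real (N S)"
    using indep[OF assms] by (metis of_nat_mult of_nat_power)
  moreover have "real m ^ r = real m * real m ^ (r - 1)"
    using r1 by (metis Suc_diff_le diff_Suc_1 power_Suc)
  ultimately have "real (B i S) * real m ^ (r - 1) = real (N S)"
    using m2 by (simp add: algebra_simps)
  then show ?thesis using m2 by (simp add: field_simps)
qed


definition "deg i = card {e'\<in>E. e' \<noteq> i \<and> e' \<inter> i \<noteq> {}}"

lemma grow:
  fixes x :: real
  assumes x: "0 \<le> x" "x \<le> 1"
    and H: "\<forall>T'. T' \<subseteq> E \<longrightarrow> card T' < n \<longrightarrow> (\<forall>i\<in>E-T'. real (B i T') \<le> x * real (N T'))"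
    and A: "finite A"
  shows "A \<inter> T = {} \<Longrightarrow> T \<union> A \<subseteq> E \<Longrightarrow> card (T \<union> A) \<le> n \<Longrightarrow>
     real (N (T \<union> A)) \<ge> (1 - x) ^ card A * real (N T)"
  using A
proof (induction A rule: finite_induct)
  case empty
  then show ?case by simp
next
  case (insert a A)
  have finT: "finite (T \<union> insert a A)" by (rule finite_subset[OF insert(5) finE])
  have aT: "a \<notin> T \<union> A" using insert(2) insert(4) by auto
  have "card (T \<union> A) < card (T \<union> insert a A)"
    using finT aT by (intro psubset_card_mono) auto
  then have lt: "card (T \<union> A) < n" using insert(6) by simp
  have sub1: "T \<union> A \<subseteq> E" using insert(5) by auto
  have aE: "a \<in> E - (T \<union> A)" using insert(5) aT by auto
  have hB: "real (B a (T \<union> A)) \<le> x * real (N (T \<union> A))" using H[rule_format, OF sub1 lt aE] .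
  have ih: "real (N (T \<union> A)) \<ge> (1 - x) ^ card A * real (N T)"
    using insert(3)[OF _ sub1 less_imp_le[OF lt]] insert(4) by auto
  have eq: "real (N (T \<union> insert a A)) = real (N (T \<union> A)) - real (B a (T \<union> A))"
    using N_insert[of a "T \<union> A"] by simp
  have "real (N (T \<union> insert a A)) \<ge> (1 - x) * real (N (T \<union> A))"
    using eq hB by (simp add: algebra_simps)
  moreover have "(1 - x) * real (N (T \<union> A)) \<ge> (1 - x) * ((1 - x) ^ card A * real (N T))"
    using ih x by (intro mult_left_mono) auto
  ultimately show ?case using insert(1,2) by simp
qed

lemma lll_main:
  fixes x :: real and d :: nat
  assumes x: "0 \<le> x" "x \<le> 1"
    and degd: "\<forall>i\<in>E. deg i \<le> d"
    and p: "1 / real m ^ (r - 1) \<le> x * (1 - x) ^ d"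
  shows "S \<subseteq> E \<Longrightarrow> \<forall>i\<in>E-S. real (B i S) \<le> x * real (N S)"
proof (induction "card S" arbitrary: S rule: less_induct)
  case less
  show ?case
  proof
    fix i assume i: "i \<in> E - S"
    define S1 where "S1 = {j\<in>S. j \<inter> i \<noteq> {}}"
    define S2 where "S2 = S - S1"
    have finS: "finite S" using less(2) finE finite_subset by blast
    have H: "\<forall>T'. T' \<subseteq> E \<longrightarrow> card T' < card S \<longrightarrow> (\<forall>i\<in>E-T'. real (B i T') \<le> x * real (N T'))"
      using less(1) by blast
    have SS: "S2 \<union> S1 = S" by (auto simp: S1_def S2_def)
    have finS1: "finite S1" using finS by (simp add: S1_def)
    have d1: "S1 \<inter> S2 = {}" by (auto simp: S1_def S2_def)
    have g: "real (N (S2 \<union> S1)) \<ge> (1 - x) ^ card S1 * real (N S2)"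
      by (rule grow[OF x H finS1 d1]) (use SS less(2) in auto)
    have "S1 \<subseteq> {e'\<in>E. e' \<noteq> i \<and> e' \<inter> i \<noteq> {}}" using i less(2) by (auto simp: S1_def)
    then have "card S1 \<le> deg i" unfolding deg_def
      by (intro card_mono) (use finE in auto)
    then have cS1: "card S1 \<le> d" using degd i by force
    have pw: "(1 - x) ^ d \<le> (1 - x) ^ card S1"
      using x cS1 by (intro power_decreasing) auto
    have NS: "real (N S) \<ge> (1 - x) ^ d * real (N S2)"
      proof -
      have "(1 - x) ^ d * real (N S2) \<le> (1 - x) ^ card S1 * real (N S2)"
        using pw by (intro mult_right_mono) auto
      then show ?thesis using g SS by simp
    qed
    have "real (B i S) \<le> real (B i S2)" using B_anti[of S2 S i] by (auto simp: S2_def)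
    also have "\<dots> = real (N S2) / real m ^ (r - 1)"
      by (rule indep_real) (use i less(2) in \<open>auto simp: S1_def S2_def\<close>)
    also have "\<dots> = (1 / real m ^ (r - 1)) * real (N S2)" by simp
    also have "\<dots> \<le> x * (1 - x) ^ d * real (N S2)"
      using p by (intro mult_right_mono) auto
    also have "\<dots> \<le> x * real (N S)"
      using NS x by (simp add: mult.assoc mult_left_mono)
    finally show "real (B i S) \<le> x * real (N S)" .
  qed
qed

lemma lll_final:
  fixes x :: real and d :: nat
  assumes x: "0 \<le> x" "x < 1"
    and degd: "\<forall>i\<in>E. deg i \<le> d"
    and p: "1 / real m ^ (r - 1) \<le> x * (1 - x) ^ d"
  shows "N E > 0"
proof -
  have H: "\<forall>T'. T' \<subseteq> E \<longrightarrow> card T' < card E \<longrightarrow> (\<forall>i\<in>E-T'. real (B i T') \<le> x * real (N T'))"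
    using lll_main[OF _ _ degd p] x by auto
  have "real (N ({} \<union> E)) \<ge> (1 - x) ^ card E * real (N {})"
    by (rule grow[OF _ _ H finE]) (use x in auto)
  moreover have "(1 - x) ^ card E * real (N {}) > 0"
    using x m2 N0 by simp
  ultimately show ?thesis by simp
qed

lemma indep0: "i \<in> E \<Longrightarrow> B i {} * m ^ (r - 1) = N {}"
proof -
  assume i: "i \<in> E"
  have "B i {} * m ^ r = m * N {}" using indep[OF i] by simp
  moreover have "m ^ r = m * m ^ (r - 1)"
    using r1 by (metis Suc_diff_le diff_Suc_1 power_Suc)
  ultimately have "m * (B i {} * m ^ (r - 1)) = m * N {}" by (simp add: algebra_simps)
  then show ?thesis using m2 by simp
qed

lemma union_final:
  assumes "card E < m ^ (r - 1)"
  shows "N E > 0"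
proof -
  have bad: "F - {f\<in>F. \<forall>e\<in>E. \<not> monoc f e} = (\<Union>e\<in>E. {f\<in>F. monoc f e \<and> (\<forall>e'\<in>{}. \<not> monoc f e')})"
    by auto
  have c1: "card (F - {f\<in>F. \<forall>e\<in>E. \<not> monoc f e}) \<le> (\<Sum>e\<in>E. B e {})"
    unfolding bad B_def by (rule card_UN_le[OF finE])
  have c2: "(\<Sum>e\<in>E. B e {}) * m ^ (r - 1) = card E * N {}"
    using indep0 by (simp add: sum_distrib_right)
  define a where "a = card (F - {f\<in>F. \<forall>e\<in>E. \<not> monoc f e})"
  define k where "k = m ^ (r - 1)"
  have NF: "N {} = card F" unfolding N_def by simp
  have mp: "m ^ card V > 0" using m2 by simp
  have Fpos: "card F > 0" using NF N0 mp by linarith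
  have "a * k \<le> (\<Sum>e\<in>E. B e {}) * k" using c1 unfolding a_def by (rule mult_le_mono1)
  also have "\<dots> = card E * card F" using c2 NF unfolding k_def by simp
  finally have ak: "a * k \<le> card E * card F" .
  have "a < card F"
  proof (rule ccontr)
    assume "\<not> a < card F"
    then have "card F * k \<le> a * k" by simp
    also have "\<dots> \<le> card E * card F" by (rule ak)
    also have "\<dots> < k * card F" using assms Fpos unfolding k_def by (intro mult_strict_right_mono) auto
    finally have "card F * k < k * card F" .
    then show False by (simp add: mult.commute)
  qed
  then have "{f\<in>F. \<forall>e\<in>E. \<not> monoc f e} \<noteq> {}"
  proof (intro notI)
    assume "a < card F" "{f\<in>F. \<forall>e\<in>E. \<not> monoc f e} = {}"
    then show False unfolding a_def by simp
  qed
  then show ?thesis unfolding N_def using finF by (simp add: card_gt_0_iff)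
qed

end


lemma real_ineq:
  fixes d K :: nat
  assumes K: "(real d + 1) * exp 1 < real K"
  shows "1 / real (K::nat) \<le> (1 / (real d + 2)) * (1 - 1 / (real d + 2)) ^ d"
proof -
  define a :: real where "a = 1 + 1 / (real d + 1)"
  have apos: "a > 0" unfolding a_def by (simp add: add_pos_nonneg)
  have "a \<le> exp (1 / (real d + 1))" unfolding a_def by (rule exp_ge_add_one_self)
  then have "a ^ (d + 1) \<le> exp (1 / (real d + 1)) ^ (d + 1)"
    using apos by (intro power_mono) auto
  also have "\<dots> = exp (real (d + 1) * (1 / (real d + 1)))"
    by (rule exp_of_nat_mult[symmetric])
  also have "\<dots> = exp 1" by simp
  finally have ae: "a ^ (d + 1) \<le> exp 1" .
  have e1: "1 - 1 / (real d + 2) = 1 / a"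
    unfolding a_def by (simp add: field_simps)
  have da: "(real d + 1) * a = real d + 2"
    unfolding a_def by (simp add: field_simps)
  have e2: "1 / (real d + 2) = 1 / ((real d + 1) * a)"
    using da by simp
  have eq: "(1 / (real d + 2)) * (1 - 1 / (real d + 2)) ^ d = 1 / ((real d + 1) * a ^ (d + 1))"
    unfolding e1 unfolding e2 using apos by (simp add: power_one_over)
  have pos: "(real d + 1) * a ^ (d + 1) > 0" using apos by simp
  have "(real d + 1) * a ^ (d + 1) \<le> (real d + 1) * exp 1"
    using ae by (intro mult_left_mono) auto
  also have "\<dots> < real K" by (rule K)
  finally have lt: "(real d + 1) * a ^ (d + 1) < real K" .
  have "1 / real K \<le> 1 / ((real d + 1) * a ^ (d + 1))"
    using pos lt by (intro divide_left_mono) auto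
  then show ?thesis using eq by simp
qed

theorem theorem1p1:
  fixes V :: "'a set" and E :: "'a set set" and r :: nat
  assumes "r \<ge> 3"
    and "bi_hypergraph V E"
    and "uniform r E"
    and "card E < (r - 1) ^ (r - 1)
         \<or> (\<forall>e\<in>E. real (card {e'\<in>E. e' \<noteq> e \<and> e' \<inter> e \<noteq> {}})
                    < real ((r - 1) ^ (r - 1)) * exp (-1) - 1)"
  shows "colorable V E"
proof -
  interpret L: LLL_setup V E "r - 1" r
    using assms(1-3) by unfold_locales (auto simp: bi_hypergraph_def uniform_def)
  have good: "colorable V E" if NE: "L.N E > 0"
  proof -
    obtain f where f: "f \<in> L.F" "\<forall>e\<in>E. \<not> monoc f e"
    proof -
      have "{f \<in> L.F. \<forall>e\<in>E. \<not> monoc f e} \<noteq> {}"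
      proof
        assume "{f \<in> L.F. \<forall>e\<in>E. \<not> monoc f e} = {}"
        then have "L.N E = 0" unfolding L.N_def by (simp only: card.empty)
        then show False using NE by simp
      qed
      then show ?thesis using that by blast
    qed
    have "proper_coloring E f"
      unfolding proper_coloring_def
    proof
      fix e assume e: "e \<in> E"
      have eV: "e \<subseteq> V" using e assms(2) by (auto simp: bi_hypergraph_def)
      have ce: "card e = r" using e assms(3) by (auto simp: uniform_def)
      have fine: "finite e" using ce assms(1) card.infinite by fastforce
      have ne: "e \<noteq> {}" using ce assms(1) by auto
      have "f ` e \<subseteq> {0..<r-1}" using f(1) eV unfolding L.F_def by (auto simp: PiE_iff)
      then have "card (f ` e) \<le> card {0..<r-1}" by (intro card_mono) auto
      then have "card (f ` e) \<le> r - 1" by simp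
      then have c2: "card (f ` e) < card e" using ce assms(1) by simp
      have "card (f ` e) \<noteq> 0" using fine ne by simp
      moreover have "card (f ` e) \<noteq> 1"
      proof
        assume "card (f ` e) = 1"
        then obtain c where "f ` e = {c}" by (auto simp: card_1_singleton_iff)
        then have "monoc f e" unfolding monoc_def by auto
        then show False using f(2) e by auto
      qed
      ultimately show "1 < card (f ` e) \<and> card (f ` e) < card e" using c2 by simp
    qed
    then show ?thesis unfolding colorable_def by blast
  qed
  show ?thesis
  proof (cases "card E < (r - 1) ^ (r - 1)")
    case True
    show ?thesis by (rule good[OF L.union_final[OF True]])
  next
    case False
    then have hyp: "\<forall>e\<in>E. real (L.deg e) < real ((r - 1) ^ (r - 1)) * exp (-1) - 1"
      using assms(4) unfolding L.deg_def by simp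
    show ?thesis
    proof (cases "E = {}")
      case True
      then show ?thesis unfolding colorable_def proper_coloring_def by simp
    next
      case Ene: False
      define d where "d = Max (L.deg ` E)"
      have degd: "\<forall>i\<in>E. L.deg i \<le> d" unfolding d_def using L.finE by simp
      obtain i0 where i0: "i0 \<in> E" "L.deg i0 = d"
      proof -
        have "Max (L.deg ` E) \<in> L.deg ` E" using L.finE Ene by (intro Max_in) auto
        then show ?thesis using that unfolding d_def by auto
      qed
      have "real d < real ((r - 1) ^ (r - 1)) * exp (-1) - 1" using hyp i0 by auto
      then have "(real d + 1) * exp 1 < real ((r - 1) ^ (r - 1)) * exp (-1) * exp 1"
        by (intro mult_strict_right_mono) auto
      also have "\<dots> = real ((r - 1) ^ (r - 1))" by (simp add: mult.assoc flip: exp_add)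
      finally have K: "(real d + 1) * exp 1 < real ((r - 1) ^ (r - 1))" .
      have p: "1 / real (r - 1) ^ (r - 1) \<le> (1 / (real d + 2)) * (1 - 1 / (real d + 2)) ^ d"
        using real_ineq[OF K] by simp
      have "L.N E > 0"
        by (rule L.lll_final[OF _ _ degd p]) auto
      then show ?thesis by (rule good)
    qed
  qed
qed

end
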